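(* For any compact metric space $(X,d)$, $$\underline{\dim}(X,d)\le\underline{\mathrm{mo}}(\mathcal K(X),H)\le\overline{\mathrm{mo}}(\mathcal K(X),H)\le\overline{\dim}(X,d).$$
   Context: For a metric space $Y$ with metric $\rho$, $A\subset Y$ nonempty and $\varepsilon>0$, $N(A,\varepsilon)$ is the smallest cardinality of a set $E\subset Y$ with $A\subset\bigcup_{x\in E}B(x,\varepsilon)$. Upper/lower box dimensions: $\overline{\dim}(A)=\limsup_{\varepsilon\to0}\frac{\log N(A,\varepsilon)}{-\log\varepsilon}$, $\underline{\dim}(A)$ with liminf. Upper/lower metric orders: $\overline{\mathrm{mo}}(A)=\limsup_{\varepsilon\to0}\frac{\log\log N(A,\varepsilon)}{-\log\varepsilon}$, $\underline{\mathrm{mo}}(A)$ with liminf. $\mathcal K(X)$ is the space of nonempty closed subsets of $X$ with the Hausdorff metric $H$. *)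

theory Defs
  imports "HOL-Analysis.Analysis"
begin

text \<open>Covering number N(A,eps) in the metric space (Y,rho): the smallest cardinality of
  a (finite) set E of points of Y whose open eps-balls (within Y) cover A.
  (Returns 0 if no finite cover exists; irrelevant for totally bounded sets.)\<close>
definition covnum :: "'a set \<Rightarrow> ('a \<Rightarrow> 'a \<Rightarrow> real) \<Rightarrow> 'a set \<Rightarrow> real \<Rightarrow> nat" where
  "covnum Y \<rho> A \<epsilon> =
     Inf {card E | E. finite E \<and> E \<subseteq> Y \<and> A \<subseteq> (\<Union>x\<in>E. {y\<in>Y. \<rho> x y < \<epsilon>})}"

definition upper_box_dim :: "'a set \<Rightarrow> ('a \<Rightarrow> 'a \<Rightarrow> real) \<Rightarrow> 'a set \<Rightarrow> ereal" where
  "upper_box_dim Y \<rho> A =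
     Limsup (at_right 0) (\<lambda>\<epsilon>. ereal (ln (real (covnum Y \<rho> A \<epsilon>)) / - ln \<epsilon>))"

definition lower_box_dim :: "'a set \<Rightarrow> ('a \<Rightarrow> 'a \<Rightarrow> real) \<Rightarrow> 'a set \<Rightarrow> ereal" where
  "lower_box_dim Y \<rho> A =
     Liminf (at_right 0) (\<lambda>\<epsilon>. ereal (ln (real (covnum Y \<rho> A \<epsilon>)) / - ln \<epsilon>))"

definition upper_metric_order :: "'a set \<Rightarrow> ('a \<Rightarrow> 'a \<Rightarrow> real) \<Rightarrow> 'a set \<Rightarrow> ereal" where
  "upper_metric_order Y \<rho> A =
     Limsup (at_right 0) (\<lambda>\<epsilon>. ereal (ln (ln (real (covnum Y \<rho> A \<epsilon>))) / - ln \<epsilon>))"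

definition lower_metric_order :: "'a set \<Rightarrow> ('a \<Rightarrow> 'a \<Rightarrow> real) \<Rightarrow> 'a set \<Rightarrow> ereal" where
  "lower_metric_order Y \<rho> A =
     Liminf (at_right 0) (\<lambda>\<epsilon>. ereal (ln (ln (real (covnum Y \<rho> A \<epsilon>))) / - ln \<epsilon>))"

definition hausdorff_dist :: "'a::metric_space set \<Rightarrow> 'a set \<Rightarrow> real" where
  "hausdorff_dist A B = max (SUP a\<in>A. infdist a B) (SUP b\<in>B. infdist b A)"

definition closed_subsets :: "'a::metric_space set \<Rightarrow> 'a set set" where
  "closed_subsets X = {A. A \<subseteq> X \<and> A \<noteq> {} \<and> closed A}"

end

theory Submission
  imports Defs "HOL-Real_Asymp.Real_Asymp"
begin

lemma covnum_le:
  assumes "finite E" "E \<subseteq> Y" "A \<subseteq> (\<Union>x\<in>E. {y\<in>Y. \<rho> x y < \<epsilon>})"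
  shows "covnum Y \<rho> A \<epsilon> \<le> card E"
  unfolding covnum_def
proof (rule wellorder_Inf_le1)
  show "card E \<in> {card E | E. finite E \<and> E \<subseteq> Y \<and> A \<subseteq> (\<Union>x\<in>E. {y\<in>Y. \<rho> x y < \<epsilon>})}"
    using assms by (intro CollectI exI[of _ E]) simp
qed

lemma covnum_obtain:
  assumes "finite E" "E \<subseteq> Y" "A \<subseteq> (\<Union>x\<in>E. {y\<in>Y. \<rho> x y < \<epsilon>})"
  obtains E' where "finite E'" "E' \<subseteq> Y" "A \<subseteq> (\<Union>x\<in>E'. {y\<in>Y. \<rho> x y < \<epsilon>})"
    "card E' = covnum Y \<rho> A \<epsilon>"
proof -
  let ?S = "{card E | E. finite E \<and> E \<subseteq> Y \<and> A \<subseteq> (\<Union>x\<in>E. {y\<in>Y. \<rho> x y < \<epsilon>})}"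
  have "card E \<in> ?S" using assms by (intro CollectI exI[of _ E]) simp
  hence "?S \<noteq> {}" by auto
  hence "Inf ?S \<in> ?S" by (rule Inf_nat_def1)
  hence "\<exists>E'. Inf ?S = card E' \<and> finite E' \<and> E' \<subseteq> Y \<and> A \<subseteq> (\<Union>x\<in>E'. {y\<in>Y. \<rho> x y < \<epsilon>})"
    by (simp only: mem_Collect_eq)
  then obtain E' where "finite E'" "E' \<subseteq> Y" "A \<subseteq> (\<Union>x\<in>E'. {y\<in>Y. \<rho> x y < \<epsilon>})"
    "card E' = Inf ?S" by (elim exE conjE) simp
  thus ?thesis using that unfolding covnum_def by simp
qed

lemma covnum_pos:
  assumes "finite E" "E \<subseteq> Y" "A \<subseteq> (\<Union>x\<in>E. {y\<in>Y. \<rho> x y < \<epsilon>})" "A \<noteq> {}"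
  shows "covnum Y \<rho> A \<epsilon> \<ge> 1"
proof -
  obtain E' where E': "finite E'" "E' \<subseteq> Y" "A \<subseteq> (\<Union>x\<in>E'. {y\<in>Y. \<rho> x y < \<epsilon>})"
    "card E' = covnum Y \<rho> A \<epsilon>" using covnum_obtain[OF assms(1-3)] by blast
  have "E' \<noteq> {}" using E'(3) assms(4) by (metis UN_empty empty_subsetI subset_antisym)
  hence "card E' > 0" using E'(1) by (simp add: card_gt_0_iff)
  thus ?thesis using E'(4) by simp
qed

lemma limsup_compare:
  fixes F G \<rho> \<sigma> :: "real \<Rightarrow> real"
  assumes ev: "eventually (\<lambda>e. F e \<le> G (e/2) * \<rho> e + \<sigma> e) (at_right 0)"
    and r: "(\<rho> \<longlongrightarrow> 1) (at_right 0)" and s: "(\<sigma> \<longlongrightarrow> 0) (at_right 0)"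
  shows "Limsup (at_right 0) (\<lambda>e. ereal (F e)) \<le> Limsup (at_right 0) (\<lambda>e. ereal (G e))"
proof (rule dense_ge)
  fix z assume z: "z > Limsup (at_right 0) (\<lambda>e. ereal (G e))"
  show "Limsup (at_right 0) (\<lambda>e. ereal (F e)) \<le> z"
  proof (cases z)
    case PInf then show ?thesis by simp
  next
    case MInf then show ?thesis using z by simp
  next
    case (real y)
    have "eventually (\<lambda>e. ereal (G e) < z) (at_right 0)" using z by (rule Limsup_lessD)
    then obtain d where d: "d > 0" "\<And>e. 0 < e \<Longrightarrow> e < d \<Longrightarrow> G e < y"
      unfolding eventually_at_right_field real by auto
    have e2: "eventually (\<lambda>e. G (e/2) < y) (at_right 0)"
      unfolding eventually_at_right_field using d by (intro exI[of _ d]) auto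
    have rp: "eventually (\<lambda>e. \<rho> e > 0) (at_right 0)"
      using r by (rule order_tendstoD) simp
    have "eventually (\<lambda>e. ereal (F e) \<le> ereal (y * \<rho> e + \<sigma> e)) (at_right 0)"
      using ev e2 rp
    proof eventually_elim
      case (elim e)
      have "G (e/2) * \<rho> e \<le> y * \<rho> e" using elim by (intro mult_right_mono) auto
      hence "F e \<le> y * \<rho> e + \<sigma> e" using elim(1) by linarith
      thus ?case by simp
    qed
    hence "Limsup (at_right 0) (\<lambda>e. ereal (F e)) \<le> Limsup (at_right 0) (\<lambda>e. ereal (y * \<rho> e + \<sigma> e))"
      by (rule Limsup_mono)
    also have "\<dots> = ereal (y * 1 + 0)"
    proof -
      have "((\<lambda>e. y * \<rho> e + \<sigma> e) \<longlongrightarrow> y * 1 + 0) (at_right 0)" by (intro tendsto_intros r s)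
      hence lim: "((\<lambda>e. ereal (y * \<rho> e + \<sigma> e)) \<longlongrightarrow> ereal (y * 1 + 0)) (at_right 0)"
        by (simp only: lim_ereal)
      show ?thesis by (rule lim_imp_Limsup[OF trivial_limit_at_right_real lim])
    qed
    finally show ?thesis using real by simp
  qed
qed

lemma liminf_compare:
  fixes F G \<rho> \<sigma> :: "real \<Rightarrow> real"
  assumes ev: "eventually (\<lambda>e. F e \<ge> G (2*e) * \<rho> e + \<sigma> e) (at_right 0)"
    and r: "(\<rho> \<longlongrightarrow> 1) (at_right 0)" and s: "(\<sigma> \<longlongrightarrow> 0) (at_right 0)"
  shows "Liminf (at_right 0) (\<lambda>e. ereal (G e)) \<le> Liminf (at_right 0) (\<lambda>e. ereal (F e))"
proof (rule dense_le)
  fix z assume z: "z < Liminf (at_right 0) (\<lambda>e. ereal (G e))"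
  show "z \<le> Liminf (at_right 0) (\<lambda>e. ereal (F e))"
  proof (cases z)
    case MInf then show ?thesis by simp
  next
    case PInf then show ?thesis using z by simp
  next
    case (real y)
    have "eventually (\<lambda>e. ereal (G e) > z) (at_right 0)" using z by (rule less_LiminfD)
    then obtain d where d: "d > 0" "\<And>e. 0 < e \<Longrightarrow> e < d \<Longrightarrow> G e > y"
      unfolding eventually_at_right_field real by auto
    have e2: "eventually (\<lambda>e. G (2*e) > y) (at_right 0)"
      unfolding eventually_at_right_field using d by (intro exI[of _ "d/2"]) auto
    have rp: "eventually (\<lambda>e. \<rho> e > 0) (at_right 0)"
      using r by (rule order_tendstoD) simp
    have "eventually (\<lambda>e. ereal (y * \<rho> e + \<sigma> e) \<le> ereal (F e)) (at_right 0)"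
      using ev e2 rp
    proof eventually_elim
      case (elim e)
      have "y * \<rho> e \<le> G (2*e) * \<rho> e" using elim by (intro mult_right_mono) auto
      hence "y * \<rho> e + \<sigma> e \<le> F e" using elim(1) by linarith
      thus ?case by simp
    qed
    hence "Liminf (at_right 0) (\<lambda>e. ereal (y * \<rho> e + \<sigma> e)) \<le> Liminf (at_right 0) (\<lambda>e. ereal (F e))"
      by (rule Liminf_mono)
    moreover have "Liminf (at_right 0) (\<lambda>e. ereal (y * \<rho> e + \<sigma> e)) = ereal (y * 1 + 0)"
    proof -
      have "((\<lambda>e. y * \<rho> e + \<sigma> e) \<longlongrightarrow> y * 1 + 0) (at_right 0)" by (intro tendsto_intros r s)
      hence lim: "((\<lambda>e. ereal (y * \<rho> e + \<sigma> e)) \<longlongrightarrow> ereal (y * 1 + 0)) (at_right 0)"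
        by (simp only: lim_ereal)
      show ?thesis by (rule lim_imp_Liminf[OF trivial_limit_at_right_real lim])
    qed
    ultimately show ?thesis using real by simp
  qed
qed

lemma rho1: "((\<lambda>e::real. (- ln (e/2)) / (- ln e)) \<longlongrightarrow> 1) (at_right 0)"
  by real_asymp
lemma rho2: "((\<lambda>e::real. (- ln (2*e)) / (- ln e)) \<longlongrightarrow> 1) (at_right 0)"
  by real_asymp
lemma sig2: "((\<lambda>e::real. c / (- ln e)) \<longlongrightarrow> 0) (at_right 0)"
  by real_asymp

lemma lnlnU:
  fixes n m :: nat
  assumes "n \<ge> 1" "m \<ge> 1" "m \<le> 2^n"
  shows "ln (ln (real m)) \<le> ln (real n)"
proof (cases "m = 1")
  case True thus ?thesis using assms by simp
next
  case False
  hence m2: "real m \<ge> 2" using assms by simp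
  have lm: "ln (real m) > 0" using m2 by simp
  have mr: "real m \<le> 2 ^ n" using assms(3) by (metis of_nat_le_iff of_nat_numeral of_nat_power)
  have "ln (real m) \<le> ln (2 ^ n)"
    using mr m2 by (subst ln_le_cancel_iff) auto
  also have "\<dots> = real n * ln 2" by (simp add: ln_realpow)
  also have "\<dots> \<le> real n" using ln_2_less_1 by (simp add: mult_left_le)
  finally have "ln (real m) \<le> real n" .
  thus ?thesis using lm by (subst ln_le_cancel_iff) auto
qed

lemma lnlnL:
  fixes n m :: nat
  assumes "n \<ge> 1" "m \<ge> 1" "2^n \<le> m + 1"
  shows "ln (ln (real m)) \<ge> ln (real n) + ln (ln 2 / 2)"
proof -
  have l2: "0 < ln (2::real)" "ln (2::real) < 1" using ln_2_less_1 by auto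
  have cneg: "ln (ln 2 / 2) < (0::real)" using l2 by (intro ln_less_zero) auto
  show ?thesis
  proof (cases "n = 1")
    case True
    show ?thesis
    proof (cases "m = 1")
      case True thus ?thesis using \<open>n = 1\<close> cneg l2 by simp
    next
      case False
      hence m2: "real m \<ge> 2" using assms by simp
      have "ln (ln 2 / 2) \<le> ln (ln (2::real))" using l2 by (subst ln_le_cancel_iff) auto
      also have "\<dots> \<le> ln (ln (real m))" using m2 l2 by (subst ln_le_cancel_iff) auto
      finally show ?thesis using \<open>n = 1\<close> by simp
    qed
  next
    case False
    hence n2: "n \<ge> 2" using assms by simp
    have "(2::nat)^n = 2 * 2^(n-1)" using n2 by (metis power_Suc Suc_diff_1 not_one_le_zero le_trans one_le_numeral linorder_not_le less_one)
    moreover have "(1::nat) \<le> 2^(n-1)" by simp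
    ultimately have "2^(n-1) \<le> m" using assms(3) by linarith
    hence mr: "(2::real)^(n-1) \<le> real m" by (metis numeral_power_le_of_nat_cancel_iff)
    have "real n * (ln 2 / 2) \<le> real (n-1) * ln 2" using n2 l2 by (simp add: of_nat_diff field_simps)
    also have "\<dots> = ln (2^(n-1))" by (simp add: ln_realpow)
    also have "\<dots> \<le> ln (real m)" using mr assms(2) by (subst ln_le_cancel_iff) auto
    finally have *: "real n * (ln 2 / 2) \<le> ln (real m)" .
    have pos: "0 < real n * (ln 2 / 2)" using n2 l2 by simp
    have "ln (real n) + ln (ln 2 / 2) = ln (real n * (ln 2 / 2))" using n2 l2 by (subst ln_mult) auto
    also have "\<dots> \<le> ln (ln (real m))" using * pos by (subst ln_le_cancel_iff) auto
    finally show ?thesis .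
  qed
qed

lemma cover_X:
  fixes X :: "'a::metric_space set"
  assumes "compact X" "\<delta> > 0"
  obtains E where "finite E" "E \<subseteq> X" "X \<subseteq> (\<Union>x\<in>E. {y\<in>X. dist x y < \<delta>})"
proof -
  have "X \<subseteq> (\<Union>x\<in>X. ball x \<delta>)" using assms(2) by auto
  then obtain C where C: "C \<subseteq> X" "finite C" "X \<subseteq> (\<Union>x\<in>C. ball x \<delta>)"
    using compactE_image[OF assms(1), of X "\<lambda>x. ball x \<delta>"] by auto
  have "X \<subseteq> (\<Union>x\<in>C. {y\<in>X. dist x y < \<delta>})" using C(3) by (auto simp: ball_def)
  thus ?thesis using that C by blast
qed

lemma hd_le:
  fixes A B :: "'a::metric_space set"
  assumes "A \<noteq> {}" "B \<noteq> {}" "\<And>a. a \<in> A \<Longrightarrow> infdist a B \<le> r" "\<And>b. b \<in> B \<Longrightarrow> infdist b A \<le> r"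
  shows "hausdorff_dist A B \<le> r"
  unfolding hausdorff_dist_def
  using assms by (intro max.boundedI cSUP_least) auto

lemma cover_K:
  fixes X :: "'a::metric_space set"
  assumes "compact X" "\<epsilon> > 0"
  obtains C where "finite C" "C \<subseteq> closed_subsets X"
    "closed_subsets X \<subseteq> (\<Union>T\<in>C. {A\<in>closed_subsets X. hausdorff_dist T A < \<epsilon>})"
    "card C \<le> 2 ^ covnum X dist X (\<epsilon>/2)"
proof -
  have e2: "\<epsilon>/2 > 0" using assms by simp
  obtain E0 where E0: "finite E0" "E0 \<subseteq> X" "X \<subseteq> (\<Union>x\<in>E0. {y\<in>X. dist x y < \<epsilon>/2})"
    using cover_X[OF assms(1) e2] by blast
  obtain E where E: "finite E" "E \<subseteq> X" "X \<subseteq> (\<Union>x\<in>E. {y\<in>X. dist x y < \<epsilon>/2})"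
    "card E = covnum X dist X (\<epsilon>/2)"
    using covnum_obtain[OF E0] by blast
  define C where "C = {T. T \<subseteq> E \<and> T \<noteq> {}}"
  have CP: "C \<subseteq> Pow E" unfolding C_def by auto
  have fC: "finite C" using CP E(1) finite_subset by blast
  have "card C \<le> card (Pow E)" using CP E(1) by (intro card_mono) auto
  hence cardC: "card C \<le> 2 ^ covnum X dist X (\<epsilon>/2)" using E(1,4) by (simp add: card_Pow)
  have CK: "C \<subseteq> closed_subsets X"
  proof
    fix T assume "T \<in> C"
    hence T: "T \<subseteq> E" "T \<noteq> {}" unfolding C_def by auto
    have "finite T" using T(1) E(1) finite_subset by blast
    thus "T \<in> closed_subsets X" using T E(2) unfolding closed_subsets_def
      by (auto intro: finite_imp_closed)
  qed
  have cov: "closed_subsets X \<subseteq> (\<Union>T\<in>C. {A\<in>closed_subsets X. hausdorff_dist T A < \<epsilon>})"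
  proof
    fix A assume A: "A \<in> closed_subsets X"
    hence AX: "A \<subseteq> X" "A \<noteq> {}" unfolding closed_subsets_def by auto
    define T where "T = {x\<in>E. \<exists>a\<in>A. dist x a < \<epsilon>/2}"
    obtain a where a: "a \<in> A" using AX by blast
    then obtain x where "x \<in> E" "dist x a < \<epsilon>/2" using E(3) AX by blast
    hence Tne: "T \<noteq> {}" unfolding T_def using a by blast
    hence TC: "T \<in> C" unfolding C_def T_def by auto
    have "hausdorff_dist T A \<le> \<epsilon>/2"
    proof (rule hd_le[OF Tne AX(2)])
      fix t assume "t \<in> T"
      then obtain a where "a \<in> A" "dist t a < \<epsilon>/2" unfolding T_def by blast
      thus "infdist t A \<le> \<epsilon>/2" by (intro infdist_le2) auto
    next
      fix b assume b: "b \<in> A"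
      then obtain x where x: "x \<in> E" "dist x b < \<epsilon>/2" using E(3) AX by blast
      hence "x \<in> T" unfolding T_def using b by blast
      thus "infdist b T \<le> \<epsilon>/2" using x by (intro infdist_le2) (auto simp: dist_commute)
    qed
    hence "hausdorff_dist T A < \<epsilon>" using assms by simp
    thus "A \<in> (\<Union>T\<in>C. {A\<in>closed_subsets X. hausdorff_dist T A < \<epsilon>})" using TC A by blast
  qed
  show ?thesis using that fC CK cov cardC by blast
qed

definition sep :: "real \<Rightarrow> 'a::metric_space set \<Rightarrow> bool" where
  "sep d S \<longleftrightarrow> (\<forall>s\<in>S. \<forall>t\<in>S. s \<noteq> t \<longrightarrow> dist s t \<ge> d)"

lemma sep_card_bound:
  fixes X :: "'a::metric_space set"
  assumes "finite E" "X \<subseteq> (\<Union>x\<in>E. {y\<in>X. dist x y < \<delta>/2})" "S \<subseteq> X" "sep \<delta> S"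
  shows "card S \<le> card E"
proof -
  have "\<forall>s\<in>S. \<exists>x\<in>E. dist x s < \<delta>/2" using assms(2,3) by blast
  then obtain f where f: "\<And>s. s \<in> S \<Longrightarrow> f s \<in> E \<and> dist (f s) s < \<delta>/2" by metis
  have "inj_on f S"
  proof (rule inj_onI)
    fix s t assume st: "s \<in> S" "t \<in> S" "f s = f t"
    have "dist s t \<le> dist s (f s) + dist (f s) t" by (rule dist_triangle)
    also have "\<dots> < \<delta>" using f[OF st(1)] f[OF st(2)] st(3) by (simp add: dist_commute)
    finally show "s = t" using assms(4) st unfolding sep_def by force
  qed
  moreover have "f ` S \<subseteq> E" using f by blast
  ultimately show ?thesis using assms(1) by (rule card_inj_on_le)
qed

lemma max_sep:
  fixes X :: "'a::metric_space set"
  assumes "compact X" "\<delta> > 0"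
  obtains S where "finite S" "S \<subseteq> X" "sep \<delta> S" "X \<subseteq> (\<Union>s\<in>S. {y\<in>X. dist s y < \<delta>})"
proof -
  have d2: "\<delta>/2 > 0" using assms by simp
  obtain E where E: "finite E" "E \<subseteq> X" "X \<subseteq> (\<Union>x\<in>E. {y\<in>X. dist x y < \<delta>/2})"
    using cover_X[OF assms(1) d2] by blast
  define Cs where "Cs = {card S | S. finite S \<and> S \<subseteq> X \<and> sep \<delta> S}"
  have "Cs \<subseteq> {..card E}" unfolding Cs_def using sep_card_bound[OF E(1,3)] by auto
  hence fin: "finite Cs" using finite_subset by blast
  have "card {} \<in> Cs" unfolding Cs_def sep_def by (intro CollectI exI[of _ "{}"]) simp
  hence ne: "Cs \<noteq> {}" by blast
  have "Max Cs \<in> Cs" using fin ne by (rule Max_in)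
  then obtain S where S: "finite S" "S \<subseteq> X" "sep \<delta> S" "card S = Max Cs"
    unfolding Cs_def by (auto simp only: mem_Collect_eq)
  have "X \<subseteq> (\<Union>s\<in>S. {y\<in>X. dist s y < \<delta>})"
  proof (rule ccontr)
    assume "\<not> X \<subseteq> (\<Union>s\<in>S. {y\<in>X. dist s y < \<delta>})"
    then obtain y where y0: "y \<in> X" "y \<notin> (\<Union>s\<in>S. {y\<in>X. dist s y < \<delta>})" by blast
    have y: "y \<in> X" "\<And>s. s \<in> S \<Longrightarrow> dist s y \<ge> \<delta>" using y0 by (auto simp: not_less)
    have yS: "y \<notin> S" using y(2)[of y] assms(2) by auto
    have "sep \<delta> (insert y S)" using S(3) y(2) unfolding sep_def by (auto simp: dist_commute)
    hence "card (insert y S) \<in> Cs" unfolding Cs_def using S y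
      by (intro CollectI exI[of _ "insert y S"]) simp
    hence "card (insert y S) \<le> Max Cs" using fin by (intro Max_ge)
    thus False using S(1,4) yS by simp
  qed
  thus ?thesis using that S by blast
qed

lemma bdd_infdist:
  fixes X :: "'a::metric_space set"
  assumes "compact X" "c \<subseteq> X" "T \<noteq> {}"
  shows "bdd_above ((\<lambda>z. infdist z T) ` c)"
proof -
  have "bounded c" using assms compact_imp_bounded bounded_subset by blast
  then obtain x e where xe: "\<And>y. y \<in> c \<Longrightarrow> dist x y \<le> e" unfolding bounded_def by blast
  obtain t where t: "t \<in> T" using assms by blast
  show ?thesis
  proof (rule bdd_aboveI2)
    fix z assume "z \<in> c"
    have "infdist z T \<le> dist z t" using t by (rule infdist_le)
    also have "\<dots> \<le> dist x z + dist x t" by (rule dist_triangle3)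
    also have "\<dots> \<le> e + dist x t" using xe[OF \<open>z \<in> c\<close>] by simp
    finally show "infdist z T \<le> e + dist x t" .
  qed
qed

lemma infdist_lessE:
  assumes "infdist x A < e" "A \<noteq> {}"
  obtains a where "a \<in> A" "dist x a < e"
proof -
  have "Inf (dist x ` A) < e" using assms by (simp add: infdist_notempty)
  then obtain v where "v \<in> dist x ` A" "v < e" using assms(2) by (meson cInf_lessD image_is_empty)
  thus ?thesis using that by blast
qed

lemma sep_key:
  fixes X :: "'a::metric_space set"
  assumes X: "compact X" and c: "c \<in> closed_subsets X"
    and S: "finite S" "sep (2*\<epsilon>) S" and T1: "T1 \<subseteq> S" and T2: "T2 \<subseteq> S" "T2 \<noteq> {}"
    and s: "s \<in> T1" "s \<notin> T2"
    and h1: "hausdorff_dist c T1 < \<epsilon>" and h2: "hausdorff_dist c T2 < \<epsilon>"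
  shows False
proof -
  have cX: "c \<subseteq> X" "c \<noteq> {}" using c unfolding closed_subsets_def by auto
  have fT1: "finite T1" using T1 S(1) finite_subset by blast
  have "infdist s c \<le> (SUP t\<in>T1. infdist t c)"
    using s(1) fT1 by (intro cSUP_upper) auto
  also have "\<dots> \<le> hausdorff_dist c T1" unfolding hausdorff_dist_def by simp
  finally have "infdist s c < \<epsilon>" using h1 by simp
  then obtain z where z: "z \<in> c" "dist s z < \<epsilon>" using cX(2) by (rule infdist_lessE)
  have "infdist z T2 \<le> (SUP z\<in>c. infdist z T2)"
    using z(1) bdd_infdist[OF X cX(1) T2(2)] by (intro cSUP_upper) auto
  also have "\<dots> \<le> hausdorff_dist c T2" unfolding hausdorff_dist_def by simp
  finally have "infdist z T2 < \<epsilon>" using h2 by simp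
  then obtain t where t: "t \<in> T2" "dist z t < \<epsilon>" using T2(2) by (rule infdist_lessE)
  have "dist s t \<le> dist s z + dist z t" by (rule dist_triangle)
  also have "\<dots> < 2*\<epsilon>" using z t by simp
  finally have "dist s t < 2*\<epsilon>" .
  moreover have "s \<noteq> t" using s t by blast
  moreover have "s \<in> S" "t \<in> S" using s T1 t T2 by auto
  ultimately show False using S(2) unfolding sep_def by force
qed

lemma lower_cov:
  fixes X :: "'a::metric_space set"
  assumes X: "compact X" and e: "\<epsilon> > 0"
  shows "2 ^ covnum X dist X (2*\<epsilon>) \<le> covnum (closed_subsets X) hausdorff_dist (closed_subsets X) \<epsilon> + 1"
proof -
  have d: "2*\<epsilon> > 0" using e by simp
  obtain S where S: "finite S" "S \<subseteq> X" "sep (2*\<epsilon>) S" "X \<subseteq> (\<Union>s\<in>S. {y\<in>X. dist s y < 2*\<epsilon>})"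
    using max_sep[OF X d] by blast
  have NS: "covnum X dist X (2*\<epsilon>) \<le> card S" using S(1,2,4) by (rule covnum_le)
  obtain C where C: "finite C" "C \<subseteq> closed_subsets X"
    "closed_subsets X \<subseteq> (\<Union>T\<in>C. {A\<in>closed_subsets X. hausdorff_dist T A < \<epsilon>})"
    "card C \<le> 2 ^ covnum X dist X (\<epsilon>/2)"
    by (rule cover_K[OF X e])
  obtain E where E: "finite E" "E \<subseteq> closed_subsets X"
    "closed_subsets X \<subseteq> (\<Union>T\<in>E. {A\<in>closed_subsets X. hausdorff_dist T A < \<epsilon>})"
    "card E = covnum (closed_subsets X) hausdorff_dist (closed_subsets X) \<epsilon>"
    by (rule covnum_obtain[OF C(1-3)])
  define Fam where "Fam = Pow S - {{}}"
  have cardF: "card Fam = 2 ^ card S - 1" unfolding Fam_def using S(1)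
    by (simp add: card_Diff_singleton card_Pow)
  have FK: "T \<in> closed_subsets X" if "T \<in> Fam" for T
  proof -
    have T: "T \<subseteq> S" "T \<noteq> {}" using that unfolding Fam_def by auto
    have "finite T" using T(1) S(1) finite_subset by blast
    thus ?thesis using T S(2) unfolding closed_subsets_def by (auto intro: finite_imp_closed)
  qed
  have "\<forall>T\<in>Fam. \<exists>c\<in>E. hausdorff_dist c T < \<epsilon>"
  proof
    fix T assume "T \<in> Fam"
    hence "T \<in> (\<Union>c\<in>E. {A\<in>closed_subsets X. hausdorff_dist c A < \<epsilon>})" using FK E(3) by blast
    thus "\<exists>c\<in>E. hausdorff_dist c T < \<epsilon>" by blast
  qed
  then obtain g where g: "\<And>T. T \<in> Fam \<Longrightarrow> g T \<in> E \<and> hausdorff_dist (g T) T < \<epsilon>" by metis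
  have inj: "inj_on g Fam"
  proof (rule inj_onI, rule ccontr)
    fix T1 T2 assume T: "T1 \<in> Fam" "T2 \<in> Fam" "g T1 = g T2" "T1 \<noteq> T2"
    have sub: "T1 \<subseteq> S" "T2 \<subseteq> S" "T1 \<noteq> {}" "T2 \<noteq> {}" using T(1,2) unfolding Fam_def by auto
    have cK: "g T1 \<in> closed_subsets X" using g[OF T(1)] E(2) by blast
    have h1: "hausdorff_dist (g T1) T1 < \<epsilon>" using g[OF T(1)] by blast
    have h2: "hausdorff_dist (g T1) T2 < \<epsilon>" using g[OF T(2)] T(3) by simp
    from T(4) obtain s where "(s \<in> T1 \<and> s \<notin> T2) \<or> (s \<in> T2 \<and> s \<notin> T1)" by blast
    thus False
    proof
      assume a: "s \<in> T1 \<and> s \<notin> T2"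
      show False by (rule sep_key[OF X cK S(1,3) sub(1) sub(2) sub(4) conjunct1[OF a] conjunct2[OF a] h1 h2])
    next
      assume a: "s \<in> T2 \<and> s \<notin> T1"
      show False by (rule sep_key[OF X cK S(1,3) sub(2) sub(1) sub(3) conjunct1[OF a] conjunct2[OF a] h2 h1])
    qed
  qed
  have "g ` Fam \<subseteq> E" using g by blast
  hence "card Fam \<le> card E" using inj E(1) by (intro card_inj_on_le) auto
  hence "2 ^ card S \<le> covnum (closed_subsets X) hausdorff_dist (closed_subsets X) \<epsilon> + 1"
    using cardF E(4) by simp
  moreover have "(2::nat) ^ covnum X dist X (2*\<epsilon>) \<le> 2 ^ card S" using NS by (rule power_increasing) simp
  ultimately show ?thesis by linarith
qed

theorem proposition4p5:
  fixes X :: "'a::metric_space set"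
  assumes "compact X" and "X \<noteq> {}"
  shows "lower_box_dim X dist X
           \<le> lower_metric_order (closed_subsets X) hausdorff_dist (closed_subsets X)
       \<and> lower_metric_order (closed_subsets X) hausdorff_dist (closed_subsets X)
           \<le> upper_metric_order (closed_subsets X) hausdorff_dist (closed_subsets X)
       \<and> upper_metric_order (closed_subsets X) hausdorff_dist (closed_subsets X)
           \<le> upper_box_dim X dist X"
proof -
  define N where "N = (\<lambda>e. covnum X dist X e)"
  define M where "M = (\<lambda>e. covnum (closed_subsets X) hausdorff_dist (closed_subsets X) e)"
  define G where "G = (\<lambda>e. ln (real (N e)) / - ln e)"
  define F where "F = (\<lambda>e. ln (ln (real (M e))) / - ln e)"
  have Npos: "N e \<ge> 1" if ep: "e > 0" for e
  proof -
    obtain E where E: "finite E" "E \<subseteq> X" "X \<subseteq> (\<Union>x\<in>E. {y\<in>X. dist x y < e})"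
      using cover_X[OF assms(1) ep] by blast
    show ?thesis unfolding N_def by (rule covnum_pos[OF E assms(2)])
  qed
  have XK: "X \<in> closed_subsets X" using assms unfolding closed_subsets_def
    by (simp add: compact_imp_closed)
  have Mb: "M e \<ge> 1 \<and> M e \<le> 2 ^ N (e/2)" if ep: "e > 0" for e
  proof -
    obtain C where C: "finite C" "C \<subseteq> closed_subsets X"
      "closed_subsets X \<subseteq> (\<Union>T\<in>C. {A\<in>closed_subsets X. hausdorff_dist T A < e})"
      "card C \<le> 2 ^ covnum X dist X (e/2)"
      by (rule cover_K[OF assms(1) ep])
    have "M e \<le> card C" unfolding M_def by (rule covnum_le[OF C(1-3)])
    moreover have "M e \<ge> 1" unfolding M_def using XK by (intro covnum_pos[OF C(1-3)]) auto
    ultimately show ?thesis using C(4) unfolding N_def by simp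
  qed
  have Ml: "2 ^ N (2*e) \<le> M e + 1" if ep: "e > 0" for e
    unfolding N_def M_def by (rule lower_cov[OF assms(1) ep])
  have up: "eventually (\<lambda>e. F e \<le> G (e/2) * ((- ln (e/2)) / (- ln e)) + 0) (at_right 0)"
    unfolding eventually_at_right_field
  proof (intro exI[of _ "1/2"] conjI allI impI)
    fix e :: real assume e: "0 < e" "e < 1/2"
    have l1: "- ln e > 0" using e by (simp add: ln_less_zero)
    have l2: "- ln (e/2) > 0" using e by (simp add: ln_less_zero)
    have "ln (ln (real (M e))) \<le> ln (real (N (e/2)))"
      using Mb[OF e(1)] Npos[of "e/2"] e by (intro lnlnU) auto
    hence "F e \<le> ln (real (N (e/2))) / - ln e" unfolding F_def using l1 by (intro divide_right_mono) auto
    also have "\<dots> = G (e/2) * ((- ln (e/2)) / (- ln e)) + 0" unfolding G_def using l2 by simp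
    finally show "F e \<le> G (e/2) * ((- ln (e/2)) / (- ln e)) + 0" .
  qed simp
  have low: "eventually (\<lambda>e. F e \<ge> G (2*e) * ((- ln (2*e)) / (- ln e)) + ln (ln 2 / 2) / (- ln e)) (at_right 0)"
    unfolding eventually_at_right_field
  proof (intro exI[of _ "1/4"] conjI allI impI)
    fix e :: real assume e: "0 < e" "e < 1/4"
    have l1: "- ln e > 0" using e by (simp add: ln_less_zero)
    have l2: "- ln (2*e) > 0" using e by (simp add: ln_less_zero)
    have "ln (real (N (2*e))) + ln (ln 2 / 2) \<le> ln (ln (real (M e)))"
      using Mb[OF e(1)] Npos[of "2*e"] Ml[OF e(1)] e by (intro lnlnL) auto
    hence "(ln (real (N (2*e))) + ln (ln 2 / 2)) / - ln e \<le> F e" unfolding F_def using l1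
      by (intro divide_right_mono) auto
    moreover have "(ln (real (N (2*e))) + ln (ln 2 / 2)) / - ln e
        = G (2*e) * ((- ln (2*e)) / (- ln e)) + ln (ln 2 / 2) / (- ln e)"
      unfolding G_def using l2 by (simp add: add_divide_distrib)
    ultimately show "G (2*e) * ((- ln (2*e)) / (- ln e)) + ln (ln 2 / 2) / (- ln e) \<le> F e" by simp
  qed simp
  have A: "Limsup (at_right 0) (\<lambda>e. ereal (F e)) \<le> Limsup (at_right 0) (\<lambda>e. ereal (G e))"
    by (rule limsup_compare[OF up rho1 tendsto_const])
  have B: "Liminf (at_right 0) (\<lambda>e. ereal (G e)) \<le> Liminf (at_right 0) (\<lambda>e. ereal (F e))"
    by (rule liminf_compare[OF low rho2 sig2])
  have C: "Liminf (at_right 0) (\<lambda>e. ereal (F e)) \<le> Limsup (at_right 0) (\<lambda>e. ereal (F e))"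
    by (rule Liminf_le_Limsup) simp
  show ?thesis using A B C
    unfolding lower_box_dim_def upper_box_dim_def lower_metric_order_def upper_metric_order_def
      F_def G_def M_def N_def by simp
qed

end
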